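(* Let $G=(V,E,p,(V_{E},V_{O}))$ be a parity game, $v\in V$, and let $\sigma$ be a (history-dependent) strategy of player Odd that is oblivious with respect to odd-dominated cycles, i.e. $\sigma(\lambda\, u\,\lambda'\,u\,\lambda'')=\sigma(\lambda\,u\,\lambda'')$ whenever $u\,\lambda'\,u$ is an odd-dominated cycle. Then $\min_{\pi\in\mathrm{Plays}(\sigma,v)}\theta(\pi)\in\mathbb{M}$.
   Context: A parity game $G=(V,E,p,(V_{E},V_{O}))$: finite $V$ partitioned into $V_{E}$ (Even) and $V_{O}$ (Odd), total edge relation $E$, priorities $p:V\to\mathbb{N}$; $V_i=\{v:p(v)=i\}$. Plays are infinite paths; Even wins iff the least priority occurring infinitely often is even. A strategy of Odd is a partial function $\sigma:V^+\to V$ defined on finite paths ending in $V_{O}$, choosing a successor of the last vertex; $\mathrm{Plays}(\sigma,v)$ is the set of plays starting in $v$ consistent with $\sigma$. An odd-dominated cycle is a path $u\,\lambda'\,u$ (starting and ending at the same vertex) whose minimal priority is odd. Let $d$ be one more than the largest priority. $\mathbb{M}$ consists of $\top$ and all tuples $(m_0,\dots,m_{d-1})\in\mathbb{N}^d$ with $m_i=0$ for even $i$ and $m_i\le|V_i|$ for odd $i$; $\mathbb{M}_{ext}$ consists of $\top$ and all tuples in $\mathbb{N}^d$ that are $0$ at even positions; both are ordered lexicographically with $\top$ maximal. A $k$-dominated stretch is a finite contiguous part of a play whose minimal priority is $k$; its degree is its number of vertices of priority $k$. The value $\theta(\pi)\in\mathbb{M}_{ext}$ of a play $\pi$ is $\top$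 if Odd wins $\pi$, and otherwise the tuple that is $0$ at even positions and, at each odd position $i$, equals the degree of the maximal $i$-dominated stretch that is a prefix of $\pi$ ($0$ if none). *)

theory Defs
  imports Main
begin

definition parity_game :: "'v set \<Rightarrow> ('v \<times> 'v) set \<Rightarrow> ('v \<Rightarrow> nat) \<Rightarrow> 'v set \<Rightarrow> 'v set \<Rightarrow> bool" where
  "parity_game V E p VE VO \<longleftrightarrow>
     finite V \<and> E \<subseteq> V \<times> V \<and> (\<forall>v\<in>V. \<exists>w. (v, w) \<in> E) \<and>
     VE \<inter> VO = {} \<and> VE \<union> VO = V"

definition is_play :: "'v set \<Rightarrow> ('v \<times> 'v) set \<Rightarrow> (nat \<Rightarrow> 'v) \<Rightarrow> bool" where
  "is_play V E \<pi> \<longleftrightarrow> (\<forall>i. \<pi> i \<in> V) \<and> (\<forall>i. (\<pi> i, \<pi> (Suc i)) \<in> E)"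

definition fin_path :: "'v set \<Rightarrow> ('v \<times> 'v) set \<Rightarrow> 'v list \<Rightarrow> bool" where
  "fin_path V E xs \<longleftrightarrow> xs \<noteq> [] \<and> set xs \<subseteq> V \<and>
     (\<forall>i. Suc i < length xs \<longrightarrow> (xs ! i, xs ! Suc i) \<in> E)"

text \<open>A strategy of Odd: a function on finite paths; only its values on finite paths
  ending in VO matter (partial function), and there it must choose a successor.\<close>
definition odd_strategy :: "'v set \<Rightarrow> ('v \<times> 'v) set \<Rightarrow> 'v set \<Rightarrow> ('v list \<Rightarrow> 'v) \<Rightarrow> bool" where
  "odd_strategy V E VO \<sigma> \<longleftrightarrow>
     (\<forall>xs. fin_path V E xs \<and> last xs \<in> VO \<longrightarrow> (last xs, \<sigma> xs) \<in> E)"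

definition plays :: "'v set \<Rightarrow> ('v \<times> 'v) set \<Rightarrow> 'v set \<Rightarrow> ('v list \<Rightarrow> 'v) \<Rightarrow> 'v \<Rightarrow> (nat \<Rightarrow> 'v) set" where
  "plays V E VO \<sigma> v = {\<pi>. is_play V E \<pi> \<and> \<pi> 0 = v \<and>
      (\<forall>i. \<pi> i \<in> VO \<longrightarrow> \<pi> (Suc i) = \<sigma> (map \<pi> [0..<Suc i]))}"

definition odd_cycle_oblivious :: "'v set \<Rightarrow> ('v \<times> 'v) set \<Rightarrow> ('v \<Rightarrow> nat) \<Rightarrow> 'v set \<Rightarrow> ('v list \<Rightarrow> 'v) \<Rightarrow> bool" where
  "odd_cycle_oblivious V E p VO \<sigma> \<longleftrightarrow>
     (\<forall>l u l' l''. fin_path V E (l @ [u] @ l' @ [u] @ l'') \<and>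
        last (l @ [u] @ l' @ [u] @ l'') \<in> VO \<and>
        odd (Min (p ` set (u # l' @ [u]))) \<longrightarrow>
        \<sigma> (l @ [u] @ l' @ [u] @ l'') = \<sigma> (l @ [u] @ l''))"

definition even_wins :: "('v \<Rightarrow> nat) \<Rightarrow> (nat \<Rightarrow> 'v) \<Rightarrow> bool" where
  "even_wins p \<pi> \<longleftrightarrow> even (LEAST k. \<exists>\<^sub>\<infinity>n. p (\<pi> n) = k)"

definition dim :: "'v set \<Rightarrow> ('v \<Rightarrow> nat) \<Rightarrow> nat" where
  "dim V p = Suc (Max (p ` V))"

text \<open>Elements of M_ext: Top or a d-tuple (list of length d).\<close>
datatype mval = Top | Tup "nat list"

fun mle :: "mval \<Rightarrow> mval \<Rightarrow> bool" where
  "mle _ Top = True"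
| "mle Top (Tup _) = False"
| "mle (Tup xs) (Tup ys) = (xs = ys \<or> (xs, ys) \<in> lexord {(a, b). a < b})"

definition M :: "'v set \<Rightarrow> ('v \<Rightarrow> nat) \<Rightarrow> mval set" where
  "M V p = {Top} \<union> {Tup xs | xs. length xs = dim V p \<and>
      (\<forall>i < dim V p. (even i \<longrightarrow> xs ! i = 0) \<and>
                      (odd i \<longrightarrow> xs ! i \<le> card {w \<in> V. p w = i}))}"

text \<open>Degree of the maximal i-dominated stretch that is a prefix of the play:
  number of positions of priority i before the first position of priority < i.\<close>
definition prefix_degree :: "('v \<Rightarrow> nat) \<Rightarrow> (nat \<Rightarrow> 'v) \<Rightarrow> nat \<Rightarrow> nat" where
  "prefix_degree p \<pi> i = card {n. p (\<pi> n) = i \<and> (\<forall>m\<le>n. i \<le> p (\<pi> m))}"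

definition theta :: "'v set \<Rightarrow> ('v \<Rightarrow> nat) \<Rightarrow> (nat \<Rightarrow> 'v) \<Rightarrow> mval" where
  "theta V p \<pi> = (if \<not> even_wins p \<pi> then Top
     else Tup (map (\<lambda>i. if even i then 0 else prefix_degree p \<pi> i) [0..<dim V p]))"

end

theory Submission imports Defs "HOL-Library.Infinite_Set" begin

fun hist :: "('v list \<Rightarrow> 'v) \<Rightarrow> 'v \<Rightarrow> nat \<Rightarrow> 'v list" where
  "hist f v 0 = [v]"
| "hist f v (Suc n) = hist f v n @ [f (hist f v n)]"

lemma hist_map: "hist f v n = map (\<lambda>k. last (hist f v k)) [0..<Suc n]"
proof (induction n)
  case 0 show ?case by simp
next
  case (Suc n)
  have "map (\<lambda>k. last (hist f v k)) [0..<Suc (Suc n)] =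
        map (\<lambda>k. last (hist f v k)) [0..<Suc n] @ [last (hist f v (Suc n))]"
    by (simp only: upt_Suc_append[OF le0] map_append list.map)
  also have "\<dots> = hist f v n @ [f (hist f v n)]" by (simp only: Suc.IH[symmetric] hist.simps last_snoc)
  also have "\<dots> = hist f v (Suc n)" by simp
  finally show ?case by simp
qed

lemma fin_path_map: "is_play V E \<pi> \<Longrightarrow> 0 < k \<Longrightarrow> fin_path V E (map \<pi> [0..<k])"
  by (auto simp: fin_path_def is_play_def)

lemma fin_path_snoc: "fin_path V E xs \<Longrightarrow> (last xs, w) \<in> E \<Longrightarrow> w \<in> V \<Longrightarrow> fin_path V E (xs @ [w])"
  unfolding fin_path_def
proof (intro conjI allI impI)
  fix i assume h: "xs \<noteq> [] \<and> set xs \<subseteq> V \<and> (\<forall>i. Suc i < length xs \<longrightarrow> (xs ! i, xs ! Suc i) \<in> E)"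
    "(last xs, w) \<in> E" "w \<in> V" "Suc i < length (xs @ [w])"
  show "((xs @ [w]) ! i, (xs @ [w]) ! Suc i) \<in> E"
  proof (cases "Suc i < length xs")
    case True then show ?thesis using h by (auto simp: nth_append)
  next
    case False
    then have "Suc i = length xs" using h by auto
    then have "i = length xs - 1" by simp
    then show ?thesis using h by (auto simp: nth_append last_conv_nth)
  qed
qed auto

lemma play_exists:
  assumes pg: "parity_game V E p VE VO" and v: "v \<in> V" and st: "odd_strategy V E VO \<sigma>"
  shows "\<exists>\<pi>. \<pi> \<in> plays V E VO \<sigma> v"
proof -
  define f where "f xs = (if last xs \<in> VO then \<sigma> xs else (SOME w. (last xs, w) \<in> E))" for xs
  have fVO: "\<And>xs. last xs \<in> VO \<Longrightarrow> f xs = \<sigma> xs" by (simp add: f_def)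
  have fnVO: "\<And>xs. last xs \<notin> VO \<Longrightarrow> f xs = (SOME w. (last xs, w) \<in> E)" by (simp add: f_def)
  have fp: "fin_path V E (hist f v n)" for n
  proof (induction n)
    case 0 then show ?case using v by (auto simp: fin_path_def)
  next
    case (Suc n)
    let ?xs = "hist f v n"
    have lv: "last ?xs \<in> V" using Suc by (auto simp: fin_path_def)
    have e: "(last ?xs, f ?xs) \<in> E"
    proof (cases "last ?xs \<in> VO")
      case True
      have "(last ?xs, \<sigma> ?xs) \<in> E" using st Suc True unfolding odd_strategy_def by blast
      then show ?thesis using fVO[OF True] by simp
    next
      case False
      obtain w where "(last ?xs, w) \<in> E" using pg lv unfolding parity_game_def by blast
      then show ?thesis using fnVO[OF False] by (auto intro: someI)
    qed
    then have "f ?xs \<in> V" using pg by (auto simp: parity_game_def)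
    then show ?case using fin_path_snoc[OF Suc e] by simp
  qed
  define \<pi> where "\<pi> k = last (hist f v k)" for k
  have hm: "hist f v n = map \<pi> [0..<Suc n]" for n unfolding \<pi>_def by (rule hist_map)
  have ps: "\<pi> (Suc n) = f (map \<pi> [0..<Suc n])" for n
    using hm[of n] by (simp add: \<pi>_def)
  have inV: "\<pi> n \<in> V" for n using fp[of n] by (auto simp: fin_path_def \<pi>_def)
  have ed: "(\<pi> n, \<pi> (Suc n)) \<in> E" for n
    using fp[of "Suc n"] unfolding hm fin_path_def by (auto simp del: upt_Suc)
  have "\<pi> \<in> plays V E VO \<sigma> v"
    unfolding plays_def is_play_def using inV ed ps fVO by (auto simp: \<pi>_def)
  then show ?thesis by blast
qed

lemma map_shift: "map (\<lambda>k. f (k + d)) [a..<b] = map f [a+d..<b+d]"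
  by (rule nth_equalityI) (auto simp: ac_simps)

lemma split_upt: "a \<le> b \<Longrightarrow> b \<le> c \<Longrightarrow> [a..<c] = [a..<b] @ [b..<c]"
  by (metis le_add_diff_inverse upt_add_eq_append)

lemma cut_play:
  assumes pg: "parity_game V E p VE VO" and ob: "odd_cycle_oblivious V E p VO \<sigma>"
    and pl: "\<pi> \<in> plays V E VO \<sigma> v" and lt: "n1 < n2" and eq: "\<pi> n1 = \<pi> n2"
    and od: "odd (Min (p ` set (map \<pi> [n1..<Suc n2])))"
  shows "(\<lambda>k. if k < n1 then \<pi> k else \<pi> (k + (n2 - n1))) \<in> plays V E VO \<sigma> v"
proof -
  define d where "d = n2 - n1"
  define \<pi>' where "\<pi>' k = (if k < n1 then \<pi> k else \<pi> (k + d))" for k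
  have ip: "is_play V E \<pi>" and p0: "\<pi> 0 = v"
    and cons: "\<And>i. \<pi> i \<in> VO \<Longrightarrow> \<pi> (Suc i) = \<sigma> (map \<pi> [0..<Suc i])"
    using pl by (auto simp: plays_def)
  have n2: "n2 = n1 + d" using lt by (simp add: d_def)
  have sh: "\<pi>' (Suc k) = \<pi> (Suc k)" if "Suc k < n1" for k using that by (simp add: \<pi>'_def)
  have sh2: "\<pi>' k = \<pi> (k + d)" if "n1 \<le> k" for k using that by (simp add: \<pi>'_def)
  have pn1: "\<pi>' n1 = \<pi> n1" using eq n2 by (simp add: \<pi>'_def)
  have step: "(\<pi>' i, \<pi>' (Suc i)) \<in> E" for i
  proof -
    consider "Suc i < n1" | "Suc i = n1" | "n1 \<le> i" by linarith
    then show ?thesis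
    proof cases
      case 1 then show ?thesis using ip by (simp add: \<pi>'_def is_play_def)
    next
      case 2 then show ?thesis using ip pn1 by (auto simp: \<pi>'_def is_play_def)
    next
      case 3 then show ?thesis using ip by (simp add: \<pi>'_def is_play_def)
    qed
  qed
  have inV: "\<pi>' i \<in> V" for i using ip by (simp add: \<pi>'_def is_play_def)
  have z: "\<pi>' 0 = v" using p0 pn1 by (cases "n1 = 0") (auto simp: \<pi>'_def)
  have pre: "map \<pi>' [0..<k] = map \<pi> [0..<k]" if "k \<le> n1" for k
    using that by (auto simp: \<pi>'_def)
  have c: "\<pi>' (Suc i) = \<sigma> (map \<pi>' [0..<Suc i])" if vo: "\<pi>' i \<in> VO" for i
  proof (cases "Suc i \<le> n1")
    case True
    then have "\<pi>' (Suc i) = \<pi> (Suc i)" using pn1 by (cases "Suc i = n1") (auto simp: \<pi>'_def)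
    moreover have "\<pi> i \<in> VO" using vo True by (simp add: \<pi>'_def)
    ultimately show ?thesis using cons pre[OF True] by metis
  next
    case False
    then have ge: "n1 \<le> i" by simp
    define j where "j = i + d"
    have vj: "\<pi> j \<in> VO" using vo ge by (simp add: \<pi>'_def j_def)
    have A: "map \<pi> [0..<Suc j] = map \<pi> [0..<n1] @ [\<pi> n1] @ map \<pi> [Suc n1..<n2] @ [\<pi> n2] @ map \<pi> [Suc n2..<Suc j]"
    proof -
      have "[0..<Suc j] = [0..<n1] @ [n1..<n2] @ [n2..<Suc j]"
        using lt ge n2 by (simp add: j_def split_upt[symmetric])
      moreover have "[n1..<n2] = n1 # [Suc n1..<n2]" using lt by (simp add: upt_conv_Cons)
      moreover have "[n2..<Suc j] = n2 # [Suc n2..<Suc j]" using ge n2 by (simp add: j_def upt_conv_Cons)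
      ultimately show ?thesis by simp
    qed
    have B: "map \<pi>' [0..<Suc i] = map \<pi> [0..<n1] @ [\<pi> n1] @ map \<pi> [Suc n2..<Suc j]"
    proof -
      have u1: "[0..<Suc i] = [0..<n1] @ [n1..<Suc i]" using ge by (simp add: split_upt[symmetric])
      have u2: "[n1..<Suc i] = n1 # [Suc n1..<Suc i]" using ge by (simp add: upt_conv_Cons)
      have u3: "map \<pi>' [Suc n1..<Suc i] = map (\<lambda>k. \<pi> (k + d)) [Suc n1..<Suc i]"
        by (rule map_cong) (auto simp: \<pi>'_def)
      have u4: "map (\<lambda>k. \<pi> (k + d)) [Suc n1..<Suc i] = map \<pi> [Suc n2..<Suc j]"
        by (simp add: map_shift n2 j_def del: upt_Suc)
      have "map \<pi>' [0..<Suc i] = map \<pi>' [0..<n1] @ \<pi>' n1 # map \<pi>' [Suc n1..<Suc i]"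
        unfolding u1 u2 by simp
      also have "\<dots> = map \<pi> [0..<n1] @ [\<pi> n1] @ map \<pi> [Suc n2..<Suc j]"
        unfolding u3 u4 pre[of n1, OF order_refl] pn1 by simp
      finally show ?thesis .
    qed
    have fp: "fin_path V E (map \<pi> [0..<Suc j])" using fin_path_map[OF ip, of "Suc j"] by (simp del: upt_Suc)
    have "\<pi> (Suc j) = \<sigma> (map \<pi> [0..<Suc j])" using cons vj by simp
    also have "\<dots> = \<sigma> (map \<pi> [0..<n1] @ [\<pi> n1] @ map \<pi> [Suc n2..<Suc j])"
    proof -
      have m: "set (\<pi> n1 # map \<pi> [Suc n1..<n2] @ [\<pi> n1]) = set (map \<pi> [n1..<Suc n2])"
      proof -
        have "[n1..<Suc n2] = n1 # [Suc n1..<n2] @ [n2]" using lt by (simp add: upt_conv_Cons)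
        then show ?thesis using eq by auto
      qed
      have lj: "last (map \<pi> [0..<Suc j]) \<in> VO" using vj by simp
      show ?thesis using ob fp lj od m unfolding A odd_cycle_oblivious_def eq[symmetric]
        by (metis (no_types, lifting) append_Cons append_Nil)
    qed
    finally show ?thesis using B sh2 ge by (simp add: j_def)
  qed
  have "\<pi>' \<in> plays V E VO \<sigma> v"
    unfolding plays_def is_play_def using inV step z c by auto
  then show ?thesis unfolding \<pi>'_def d_def .
qed


lemma INFM_cut:
  fixes \<pi> \<pi>' :: "nat \<Rightarrow> 'a"
  assumes "\<And>k. n1 \<le> k \<Longrightarrow> \<pi>' k = \<pi> (k + d)"
  shows "(\<exists>\<^sub>\<infinity>n. Q (\<pi>' n)) \<longleftrightarrow> (\<exists>\<^sub>\<infinity>n. Q (\<pi> n))"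
proof
  assume h: "\<exists>\<^sub>\<infinity>n. Q (\<pi>' n)"
  show "\<exists>\<^sub>\<infinity>n. Q (\<pi> n)" unfolding INFM_nat
  proof
    fix m
    obtain n where "n > m + n1" "Q (\<pi>' n)" using h unfolding INFM_nat by blast
    then show "\<exists>n>m. Q (\<pi> n)" using assms[of n] by (intro exI[of _ "n + d"]) auto
  qed
next
  assume h: "\<exists>\<^sub>\<infinity>n. Q (\<pi> n)"
  show "\<exists>\<^sub>\<infinity>n. Q (\<pi>' n)" unfolding INFM_nat
  proof
    fix m
    obtain n where "n > m + n1 + d" "Q (\<pi> n)" using h unfolding INFM_nat by blast
    then show "\<exists>n>m. Q (\<pi>' n)" using assms[of "n - d"] by (intro exI[of _ "n - d"]) auto
  qed
qed

lemma S_finite: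
  assumes ew: "even_wins p \<pi>" and oi: "odd i"
  shows "finite {n. p (\<pi> n) = i \<and> (\<forall>m\<le>n. i \<le> p (\<pi> m))}" (is "finite ?S")
proof (rule ccontr)
  assume inf: "infinite ?S"
  have inf2: "\<exists>\<^sub>\<infinity>n. p (\<pi> n) = i"
    unfolding INFM_iff_infinite using inf by (rule infinite_super[rotated]) auto
  have all: "i \<le> p (\<pi> m)" for m
  proof -
    obtain n where "n \<ge> m" "n \<in> ?S" using inf unfolding infinite_nat_iff_unbounded_le by blast
    then show ?thesis by auto
  qed
  have "(LEAST k. \<exists>\<^sub>\<infinity>n. p (\<pi> n) = k) = i"
  proof (rule Least_equality)
    show "\<exists>\<^sub>\<infinity>n. p (\<pi> n) = i" by (fact inf2)
  next
    fix y assume "\<exists>\<^sub>\<infinity>n. p (\<pi> n) = y"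
    then obtain n where "p (\<pi> n) = y" by (auto elim: INFM_E)
    then show "i \<le> y" using all[of n] by simp
  qed
  then show False using ew oi by (simp add: even_wins_def)
qed

lemma cut_theta:
  assumes lt: "n1 < n2" and eq: "\<pi> n1 = \<pi> n2" and ge: "\<forall>m\<le>n2. i \<le> p (\<pi> m)"
    and pi: "p (\<pi> n1) = i" and oi: "odd i" and ew: "even_wins p \<pi>" and idim: "i < dim V p"
  shows "\<exists>xs ys. theta V p \<pi> = Tup xs \<and>
     theta V p (\<lambda>k. if k < n1 then \<pi> k else \<pi> (k + (n2 - n1))) = Tup ys \<and>
     (ys, xs) \<in> lexord {(a, b). a < b}"
proof -
  define d where "d = n2 - n1"
  define \<pi>' where "\<pi>' k = (if k < n1 then \<pi> k else \<pi> (k + d))" for k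
  have n2: "n2 = n1 + d" using lt by (simp add: d_def)
  have sh: "\<And>k. n1 \<le> k \<Longrightarrow> \<pi>' k = \<pi> (k + d)" by (simp add: \<pi>'_def)
  have ew': "even_wins p \<pi>'"
  proof -
    have "(\<exists>\<^sub>\<infinity>n. p (\<pi>' n) = k) = (\<exists>\<^sub>\<infinity>n. p (\<pi> n) = k)" for k
      using INFM_cut[of n1 \<pi>' \<pi> d "\<lambda>x. p x = k", OF sh] by simp
    then show ?thesis using ew unfolding even_wins_def by simp
  qed
  define S where "S \<rho> j = {n. p (\<rho> n) = j \<and> (\<forall>m\<le>n. j \<le> p (\<rho> m))}" for \<rho> :: "nat \<Rightarrow> _" and j
  define g where "g n = (if n < n1 then n else n + d)" for n
  have ginj: "inj g" unfolding g_def inj_on_def by auto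
  have pre: "\<And>k. k < n1 \<Longrightarrow> \<pi>' k = \<pi> k" by (simp add: \<pi>'_def)
  have gimg: "g ` S \<pi>' j = S \<pi> j - {n1..<n2}" if ji: "j \<le> i" for j
  proof (rule set_eqI, rule iffI)
    fix x assume "x \<in> g ` S \<pi>' j"
    then obtain n where x: "x = g n" and n: "n \<in> S \<pi>' j" by blast
    have np: "p (\<pi>' n) = j" and nall: "\<And>m. m \<le> n \<Longrightarrow> j \<le> p (\<pi>' m)" using n by (auto simp: S_def)
    show "x \<in> S \<pi> j - {n1..<n2}"
    proof (cases "n < n1")
      case True
      have "j \<le> p (\<pi> m)" if "m \<le> n" for m using nall[OF that] pre[of m] that True by simp
      moreover have "p (\<pi> n) = j" using np pre[OF True] by simp
      ultimately show ?thesis using True x by (simp add: g_def S_def)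
    next
      case False
      have gx: "x = n + d" using x False by (simp add: g_def)
      have "j \<le> p (\<pi> m)" if "m \<le> n + d" for m
      proof -
        consider "m < n1" | "n1 \<le> m \<and> m < n2" | "n2 \<le> m" by linarith
        then show ?thesis
        proof cases
          case 1 then show ?thesis using nall[of m] pre[of m] False by simp
        next
          case 2 then have "i \<le> p (\<pi> m)" using ge by simp
          then show ?thesis using ji by simp
        next
          case 3
          then have a: "m - d \<le> n" "n1 \<le> m - d" using that n2 by auto
          have "j \<le> p (\<pi>' (m - d))" using nall[OF a(1)] .
          moreover have "\<pi>' (m - d) = \<pi> m" using sh[OF a(2)] 3 n2 by simp
          ultimately show ?thesis by simp
        qed
      qed
      moreover have "p (\<pi> (n + d)) = j" using np sh[of n] False by simp
      ultimately show ?thesis using gx False n2 by (simp add: S_def)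
    qed
  next
    fix x assume x: "x \<in> S \<pi> j - {n1..<n2}"
    have xp: "p (\<pi> x) = j" and xall: "\<And>m. m \<le> x \<Longrightarrow> j \<le> p (\<pi> m)" and xn: "x \<notin> {n1..<n2}"
      using x by (auto simp: S_def)
    show "x \<in> g ` S \<pi>' j"
    proof (cases "x < n1")
      case True
      have "j \<le> p (\<pi>' m)" if "m \<le> x" for m using xall[OF that] pre[of m] that True by simp
      moreover have "p (\<pi>' x) = j" using xp pre[OF True] by simp
      ultimately have "x \<in> S \<pi>' j" by (simp add: S_def)
      moreover have "g x = x" using True by (simp add: g_def)
      ultimately show ?thesis by (metis imageI)
    next
      case False
      then have xn2: "n2 \<le> x" using xn by auto
      have "j \<le> p (\<pi>' m)" if "m \<le> x - d" for m
      proof (cases "m < n1")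
        case True then show ?thesis using xall[of m] pre[OF True] that xn2 n2 by simp
      next
        case False then show ?thesis using xall[of "m + d"] sh[of m] that xn2 n2 by simp
      qed
      moreover have "p (\<pi>' (x - d)) = j" using xp sh[of "x - d"] xn2 n2 by simp
      ultimately have "x - d \<in> S \<pi>' j" by (simp add: S_def)
      moreover have "g (x - d) = x" using xn2 n2 by (simp add: g_def)
      ultimately show ?thesis by (metis imageI)
    qed
  qed
  have pdS: "prefix_degree p \<rho> j = card (S \<rho> j)" for \<rho> j by (simp add: prefix_degree_def S_def)
  have less_eq: "prefix_degree p \<pi>' j = prefix_degree p \<pi> j" if "j < i" for j
  proof -
    have "S \<pi> j \<inter> {n1..<n2} = {}"
    proof (rule ccontr)
      assume "S \<pi> j \<inter> {n1..<n2} \<noteq> {}"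
      then obtain x where "x \<in> S \<pi> j" "x < n2" by auto
      then have "p (\<pi> x) = j" "i \<le> p (\<pi> x)" using ge by (auto simp: S_def)
      then show False using that by simp
    qed
    then have "S \<pi> j - {n1..<n2} = S \<pi> j" by blast
    then show ?thesis using gimg[of j] that card_image[OF inj_on_subset[OF ginj subset_UNIV], of "S \<pi>' j"]
      by (simp add: pdS)
  qed
  have fin: "finite (S \<pi> i)" using S_finite[OF ew oi] by (simp add: S_def)
  have n1S: "n1 \<in> S \<pi> i" using ge pi lt by (auto simp: S_def)
  have strict: "prefix_degree p \<pi>' i < prefix_degree p \<pi> i"
  proof -
    have ps: "S \<pi> i - {n1..<n2} \<subset> S \<pi> i"
    proof (rule psubsetI[OF Diff_subset])
      have "n1 \<in> {n1..<n2}" using lt by simp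
      then have "n1 \<notin> S \<pi> i - {n1..<n2}" by (simp only: Diff_iff simp_thms)
      then show "S \<pi> i - {n1..<n2} \<noteq> S \<pi> i" using n1S by metis
    qed
    have "prefix_degree p \<pi>' i = card (S \<pi>' i)" by (rule pdS)
    also have "\<dots> = card (g ` S \<pi>' i)"
      by (rule card_image[symmetric]) (rule inj_on_subset[OF ginj subset_UNIV])
    also have "\<dots> = card (S \<pi> i - {n1..<n2})" using gimg[of i] by simp
    also have "\<dots> < card (S \<pi> i)" by (rule psubset_card_mono[OF fin ps])
    also have "\<dots> = prefix_degree p \<pi> i" by (rule pdS[symmetric])
    finally show ?thesis .
  qed
  define F where "F \<rho> j = (if even j then 0 else prefix_degree p \<rho> j)" for \<rho> j
  have th1: "theta V p \<pi> = Tup (map (F \<pi>) [0..<dim V p])" using ew by (simp add: theta_def F_def)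
  have th2: "theta V p \<pi>' = Tup (map (F \<pi>') [0..<dim V p])" using ew' by (simp add: theta_def F_def)
  have "(map (F \<pi>') [0..<dim V p], map (F \<pi>) [0..<dim V p]) \<in> lexord {(a, b). a < b}"
    unfolding lexord_take_index_conv
  proof (intro disjI2 exI conjI)
    show "i < min (length (map (F \<pi>') [0..<dim V p])) (length (map (F \<pi>) [0..<dim V p]))"
      using idim by simp
    show "take i (map (F \<pi>') [0..<dim V p]) = take i (map (F \<pi>) [0..<dim V p])"
      using idim less_eq by (auto simp: take_map F_def)
    show "(map (F \<pi>') [0..<dim V p] ! i, map (F \<pi>) [0..<dim V p] ! i) \<in> {(a, b). a < b}"
      using idim strict oi by (simp add: F_def)
  qed
  then show ?thesis using th1 th2 unfolding \<pi>'_def d_def by blast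
qed


lemma min_exists:
  fixes T :: "mval set"
  assumes ne: "T \<noteq> {}" and sh: "\<And>x. x \<in> T \<Longrightarrow> x = Top \<or> (\<exists>xs. x = Tup xs \<and> length xs = D)"
  shows "\<exists>m\<in>T. \<forall>x\<in>T. mle m x"
proof (cases "\<exists>xs. Tup xs \<in> T")
  case False
  obtain t where t: "t \<in> T" using ne by blast
  have allTop: "\<And>x. x \<in> T \<Longrightarrow> x = Top"
  proof -
    fix x assume x: "x \<in> T"
    show "x = Top"
    proof (cases x)
      case (Tup xs) then show ?thesis using False x by blast
    qed simp
  qed
  have "\<forall>x\<in>T. mle t x"
  proof
    fix x assume "x \<in> T"
    then have "x = Top" by (rule allTop)
    then show "mle t x" by simp
  qed
  then show ?thesis using t by blast
next
  case True
  define L where "L = {xs. Tup xs \<in> T}"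
  define R where "R = {(a, b). a < (b::nat)}"
  have wfR: "wf (lex R)" unfolding R_def by (intro wf_lex wf_less)
  obtain xs0 where x0: "xs0 \<in> L" and mn: "\<And>ys. (ys, xs0) \<in> lex R \<Longrightarrow> ys \<notin> L"
    using wfE_min[OF wfR, of _ L] True unfolding L_def by blast
  have lin: "\<forall>a b. (a, b) \<in> R \<or> a = b \<or> (b, a) \<in> R" unfolding R_def by auto
  have "\<forall>x\<in>T. mle (Tup xs0) x"
  proof
    fix x assume xT: "x \<in> T"
    show "mle (Tup xs0) x"
    proof (cases x)
      case Top then show ?thesis by simp
    next
      case (Tup ys)
      have l1: "length ys = D" using sh[OF xT] Tup by auto
      have l0: "length xs0 = D" using sh[of "Tup xs0"] x0 by (auto simp: L_def)
      have yL: "ys \<in> L" using xT Tup by (simp add: L_def)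
      have "(ys, xs0) \<notin> lexord R"
      proof
        assume "(ys, xs0) \<in> lexord R"
        then have "(ys, xs0) \<in> lex R" using l0 l1 by (simp add: lexord_lex)
        then show False using mn yL by blast
      qed
      then show ?thesis using lexord_linear[OF lin, of xs0 ys] Tup by (auto simp: R_def)
    qed
  qed
  then show ?thesis using x0 unfolding L_def by blast
qed

lemma theta_shape: "theta V p \<pi> = Top \<or> (\<exists>xs. theta V p \<pi> = Tup xs \<and> length xs = dim V p)"
  by (simp add: theta_def)

theorem lemma3:
  fixes V :: "'v set" and E :: "('v \<times> 'v) set" and p :: "'v \<Rightarrow> nat"
    and VE VO :: "'v set" and \<sigma> :: "'v list \<Rightarrow> 'v" and v :: 'v
  assumes "parity_game V E p VE VO"
    and "v \<in> V"
    and "odd_strategy V E VO \<sigma>"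
    and "odd_cycle_oblivious V E p VO \<sigma>"
  shows "\<exists>m \<in> theta V p ` plays V E VO \<sigma> v.
           (\<forall>x \<in> theta V p ` plays V E VO \<sigma> v. mle m x) \<and> m \<in> M V p"
proof -
  note pg = assms(1) and ob = assms(4)
  let ?T = "theta V p ` plays V E VO \<sigma> v"
  have ne: "?T \<noteq> {}" using play_exists[OF assms(1,2,3)] by blast
  obtain m where mT: "m \<in> ?T" and mmin: "\<forall>x\<in>?T. mle m x"
    using min_exists[OF ne, of "dim V p"] theta_shape by blast
  obtain \<pi> where pl: "\<pi> \<in> plays V E VO \<sigma> v" and m: "m = theta V p \<pi>" using mT by blast
  have ip: "is_play V E \<pi>" using pl by (simp add: plays_def)
  have finV: "finite V" using pg by (simp add: parity_game_def)
  have "m \<in> M V p"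
  proof (cases "even_wins p \<pi>")
    case False
    then show ?thesis using m by (simp add: theta_def M_def)
  next
    case ew: True
    define xs where "xs = map (\<lambda>i. if even i then 0 else prefix_degree p \<pi> i) [0..<dim V p]"
    have mx: "m = Tup xs" using m ew by (simp add: theta_def xs_def)
    have bound: "prefix_degree p \<pi> i \<le> card {w \<in> V. p w = i}" if oi: "odd i" and idim: "i < dim V p" for i
    proof (rule ccontr)
      assume neg: "\<not> ?thesis"
      define S where "S = {n. p (\<pi> n) = i \<and> (\<forall>m\<le>n. i \<le> p (\<pi> m))}"
      have gt: "card {w \<in> V. p w = i} < card S" using neg by (simp add: prefix_degree_def S_def)
      have sub: "\<pi> ` S \<subseteq> {w \<in> V. p w = i}" using ip by (auto simp: S_def is_play_def)
      have "\<not> inj_on \<pi> S"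
      proof
        assume "inj_on \<pi> S"
        from card_inj_on_le[OF this sub] finV have "card S \<le> card {w \<in> V. p w = i}" by simp
        then show False using gt by simp
      qed
      then obtain a b where ab: "a \<in> S" "b \<in> S" "a \<noteq> b" "\<pi> a = \<pi> b" unfolding inj_on_def by blast
      define n1 where "n1 = min a b"
      define n2 where "n2 = max a b"
      have lt: "n1 < n2" using ab by (simp add: n1_def n2_def)
      have eq: "\<pi> n1 = \<pi> n2" using ab by (simp add: n1_def n2_def min_def max_def)
      have n1S: "n1 \<in> S" and n2S: "n2 \<in> S" using ab by (simp_all add: n1_def n2_def min_def max_def)
      have ge: "\<forall>m\<le>n2. i \<le> p (\<pi> m)" using n2S by (simp add: S_def)
      have pi: "p (\<pi> n1) = i" using n1S by (simp add: S_def)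
      have "Min (p ` set (map \<pi> [n1..<Suc n2])) = i"
      proof (rule Min_eqI)
        show "finite (p ` set (map \<pi> [n1..<Suc n2]))" by simp
        show "i \<le> y" if "y \<in> p ` set (map \<pi> [n1..<Suc n2])" for y using that ge by auto
        have "n1 \<in> set [n1..<Suc n2]" using lt by simp
        then have "\<pi> n1 \<in> set (map \<pi> [n1..<Suc n2])" by (simp only: set_map) (rule imageI)
        then show "i \<in> p ` set (map \<pi> [n1..<Suc n2])" by (rule image_eqI[of i p "\<pi> n1", OF pi[symmetric]])
      qed
      then have od: "odd (Min (p ` set (map \<pi> [n1..<Suc n2])))" using oi by simp
      have pl': "(\<lambda>k. if k < n1 then \<pi> k else \<pi> (k + (n2 - n1))) \<in> plays V E VO \<sigma> v"
        by (rule cut_play[OF pg ob pl lt eq od])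
      obtain xs' ys where c: "theta V p \<pi> = Tup xs'"
        "theta V p (\<lambda>k. if k < n1 then \<pi> k else \<pi> (k + (n2 - n1))) = Tup ys"
        "(ys, xs') \<in> lexord {(a, b). a < b}"
        using cut_theta[OF lt eq ge pi oi ew idim] by blast
      have "Tup ys \<in> ?T" using imageI[OF pl', of "theta V p"] c(2) by simp
      then have "mle m (Tup ys)" using mmin by blast
      then have h: "xs' = ys \<or> (xs', ys) \<in> lexord {(a, b). a < (b::nat)}" using m c(1) by simp
      have tr: "trans {(a, b). a < (b::nat)}" by (auto simp: trans_def)
      have irr: "\<And>zs. (zs, zs) \<notin> lexord {(a, b). a < (b::nat)}"
        by (rule lexord_irreflexive) simp
      from h show False
      proof
        assume "xs' = ys" then show False using c(3) irr by simp
      next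
        assume "(xs', ys) \<in> lexord {(a, b). a < (b::nat)}"
        from lexord_trans[OF c(3) this tr] show False using irr by simp
      qed
    qed
    have "length xs = dim V p" by (simp add: xs_def)
    moreover have "\<forall>i<dim V p. (even i \<longrightarrow> xs ! i = 0) \<and> (odd i \<longrightarrow> xs ! i \<le> card {w \<in> V. p w = i})"
      using bound by (simp add: xs_def)
    ultimately have "Tup xs \<in> {Tup xs | xs. length xs = dim V p \<and>
      (\<forall>i < dim V p. (even i \<longrightarrow> xs ! i = 0) \<and> (odd i \<longrightarrow> xs ! i \<le> card {w \<in> V. p w = i}))}"
      by (intro CollectI exI[of _ xs] conjI refl)
    then have "Tup xs \<in> M V p" unfolding M_def by (rule UnI2)
    then show ?thesis using mx by simp
  qed
  then show ?thesis using mT mmin by blast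
qed

end
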